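(* For every $b>1$ and every $\delta>0$ there exists an instance (a finite directed acyclic graph with nonnegative edge costs, start node $s$ and target node $t$) on which the cost $C_s(s)$ incurred by the sophisticated agent with present-bias parameter $b$ is at least $(b-\delta)$ times the cost $C_n(s)$ incurred by the naive agent with present-bias parameter $b$. That is, the ratio of the sophisticated agent's cost to the naive agent's cost can be arbitrarily close to $b$.
   Context: An instance is a finite directed acyclic graph $G=(V,E)$ with nonnegative edge costs $c(u,v)$, start node $s$ and target node $t$, where $t$ is the unique node with no outgoing edges. $C_o(u)$ denotes the minimum cost of a $u$–$t$ path. Sophisticated agent with bias $b$: $C_s(t)=0$, and for $u\ne t$, $S_s(u)\in\arg\min_{v:(u,v)\in E}(b\,c(u,v)+C_s(v))$, $C_s(u)=c(u,S_s(u))+C_s(S_s(u))$. Naive agent with bias $b$: $C_n(t)=0$, and for $u\ne t$, $S_n(u)\in\arg\min_{v:(u,v)\in E}(b\,c(u,v)+C_o(v))$, $C_n(u)=c(u,S_n(u))+C_n(S_n(u))$. Each agent starting at $s$ repeatedly moves to its chosen successor until reaching $t$; its incurred cost is $C_s(s)$, respectively $C_n(s)$. *)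

theory Defs
  imports Complex_Main
begin

definition is_instance :: "nat set \<Rightarrow> (nat \<times> nat) set \<Rightarrow> (nat \<Rightarrow> nat \<Rightarrow> real) \<Rightarrow> nat \<Rightarrow> nat \<Rightarrow> bool" where
  "is_instance V E c s t \<longleftrightarrow>
     finite V \<and> E \<subseteq> V \<times> V \<and> acyclic E \<and> s \<in> V \<and> t \<in> V \<and>
     (\<forall>u v. (u, v) \<in> E \<longrightarrow> c u v \<ge> 0) \<and>
     (\<forall>u\<in>V. (\<not> (\<exists>v. (u, v) \<in> E)) \<longleftrightarrow> u = t)"

definition is_path :: "(nat \<times> nat) set \<Rightarrow> nat list \<Rightarrow> bool" where
  "is_path E p \<longleftrightarrow> p \<noteq> [] \<and> (\<forall>i. Suc i < length p \<longrightarrow> (p ! i, p ! Suc i) \<in> E)"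

definition path_cost :: "(nat \<Rightarrow> nat \<Rightarrow> real) \<Rightarrow> nat list \<Rightarrow> real" where
  "path_cost c p = (\<Sum>i<length p - 1. c (p ! i) (p ! Suc i))"

definition opt_cost :: "(nat \<times> nat) set \<Rightarrow> (nat \<Rightarrow> nat \<Rightarrow> real) \<Rightarrow> nat \<Rightarrow> nat \<Rightarrow> real" where
  "opt_cost E c t u = Min {path_cost c p | p. is_path E p \<and> hd p = u \<and> last p = t}"

definition soph_agent :: "nat set \<Rightarrow> (nat \<times> nat) set \<Rightarrow> (nat \<Rightarrow> nat \<Rightarrow> real) \<Rightarrow> nat \<Rightarrow> real
     \<Rightarrow> (nat \<Rightarrow> nat) \<Rightarrow> (nat \<Rightarrow> real) \<Rightarrow> bool" where
  "soph_agent V E c t b S C \<longleftrightarrow>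
     C t = 0 \<and>
     (\<forall>u\<in>V - {t}. (u, S u) \<in> E \<and>
        (\<forall>v. (u, v) \<in> E \<longrightarrow> b * c u (S u) + C (S u) \<le> b * c u v + C v) \<and>
        C u = c u (S u) + C (S u))"

definition naive_agent :: "nat set \<Rightarrow> (nat \<times> nat) set \<Rightarrow> (nat \<Rightarrow> nat \<Rightarrow> real) \<Rightarrow> nat \<Rightarrow> real
     \<Rightarrow> (nat \<Rightarrow> nat) \<Rightarrow> (nat \<Rightarrow> real) \<Rightarrow> bool" where
  "naive_agent V E c t b S C \<longleftrightarrow>
     C t = 0 \<and>
     (\<forall>u\<in>V - {t}. (u, S u) \<in> E \<and>
        (\<forall>v. (u, v) \<in> E \<longrightarrow> b * c u (S u) + opt_cost E c t (S u) \<le> b * c u v + opt_cost E c t v) \<and>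
        C u = c u (S u) + C (S u))"

end

theory Submission
  imports Defs
begin

lemma is_path_Cons2: "is_path E (a#b#q) \<longleftrightarrow> (a,b)\<in>E \<and> is_path E (b#q)"
  unfolding is_path_def
  apply (auto simp: nth_Cons split: nat.splits)
  done

lemma is_path_single: "is_path E [a]"
  unfolding is_path_def by auto

lemma path_cost_Cons2: "path_cost c (a#b#q) = c a b + path_cost c (b#q)"
  unfolding path_cost_def by (simp only: length_Cons diff_Suc_1 sum.lessThan_Suc_shift) simp

lemma path_cost_single: "path_cost c [a] = 0"
  unfolding path_cost_def by simp

definition EE :: "(nat \<times> nat) set" where
  "EE = {(0,2),(0,4),(4,1),(2,1),(2,3),(3,1)}"

definition cc :: "real \<Rightarrow> real \<Rightarrow> real \<Rightarrow> nat \<Rightarrow> nat \<Rightarrow> real" where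
  "cc P Q R u v = (if u = 0 \<and> v = 2 then 1 else if u = 4 then R else if u = 2 \<and> v = 1 then P
                   else if u = 3 then Q else 0)"

lemma paths_from_1: "is_path EE (1#q) \<Longrightarrow> q = []"
  by (cases q) (auto simp: is_path_Cons2 EE_def)

lemma paths_3: assumes "is_path EE (3#q)" "last (3#q) = 1" shows "q = [1]"
proof (cases q)
  case Nil thus ?thesis using assms by simp
next
  case (Cons a r)
  hence "(3,a) \<in> EE" "is_path EE (a#r)" using assms is_path_Cons2 by auto
  hence "a = 1" by (simp add: EE_def)
  hence "r = []" using paths_from_1 \<open>is_path EE (a#r)\<close> by simp
  thus ?thesis using Cons \<open>a = 1\<close> by simp
qed

lemma paths_4: assumes "is_path EE (4#q)" "last (4#q) = 1" shows "q = [1]"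
proof (cases q)
  case Nil thus ?thesis using assms by simp
next
  case (Cons a r)
  hence "(4,a) \<in> EE" "is_path EE (a#r)" using assms is_path_Cons2 by auto
  hence "a = 1" by (simp add: EE_def)
  hence "r = []" using paths_from_1 \<open>is_path EE (a#r)\<close> by simp
  thus ?thesis using Cons \<open>a = 1\<close> by simp
qed

lemma paths_2: assumes "is_path EE (2#q)" "last (2#q) = 1" shows "q = [1] \<or> q = [3,1]"
proof (cases q)
  case Nil thus ?thesis using assms by simp
next
  case (Cons a r)
  hence "(2,a) \<in> EE" "is_path EE (a#r)" using assms is_path_Cons2 by auto
  hence "a = 1 \<or> a = 3" by (auto simp add: EE_def)
  moreover have "last (a#r) = 1" using assms Cons by simp
  ultimately show ?thesis using paths_from_1 paths_3 \<open>is_path EE (a#r)\<close> Cons by auto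
qed

lemma hd_form: "is_path E p \<Longrightarrow> hd p = u \<Longrightarrow> \<exists>q. p = u#q"
  unfolding is_path_def by (cases p) auto

lemma opt_1: "opt_cost EE (cc P Q R) 1 1 = 0"
proof -
  have A: "path_cost (cc P Q R) p = 0" if "is_path EE p" "hd p = 1" for p
    using hd_form[OF that] that paths_from_1 path_cost_single by blast
  have B: "path_cost (cc P Q R) [1] = 0 \<and> is_path EE [1] \<and> hd [1] = (1::nat) \<and> last [1] = (1::nat)"
    by (simp add: path_cost_single is_path_single)
  have "{path_cost (cc P Q R) p | p. is_path EE p \<and> hd p = 1 \<and> last p = 1} = {0}"
  proof (intro set_eqI iffI)
    fix x :: real assume "x \<in> {path_cost (cc P Q R) p | p. is_path EE p \<and> hd p = 1 \<and> last p = 1}"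
    then obtain p where "x = path_cost (cc P Q R) p" "is_path EE p" "hd p = 1" "last p = 1" by blast
    then show "x \<in> {0::real}" using A by simp
  next
    fix x assume "x \<in> {0::real}"
    then have "x = path_cost (cc P Q R) [1] \<and> is_path EE [1] \<and> hd [1] = (1::nat) \<and> last [1] = (1::nat)" using B by simp
    then show "x \<in> {path_cost (cc P Q R) p | p. is_path EE p \<and> hd p = 1 \<and> last p = 1}" by blast
  qed
  thus ?thesis unfolding opt_cost_def by simp
qed

lemma opt_3: "opt_cost EE (cc P Q R) 1 3 = Q"
proof -
  have A: "path_cost (cc P Q R) p = Q" if "is_path EE p" "hd p = 3" "last p = 1" for p
  proof -
    note h = that
    obtain q where "p = 3#q" using hd_form[OF h(1) h(2)] by blast
    hence "p = [3,1]" using paths_3 h by simp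
    thus ?thesis by (simp add: path_cost_Cons2 path_cost_single cc_def)
  qed
  have B: "path_cost (cc P Q R) [3,1] = Q \<and> is_path EE [3,1] \<and> hd [3,1] = (3::nat) \<and> last [3,1] = (1::nat)"
    by (simp add: path_cost_Cons2 path_cost_single is_path_Cons2 is_path_single cc_def EE_def)
  have "{path_cost (cc P Q R) p | p. is_path EE p \<and> hd p = 3 \<and> last p = 1} = {Q}"
  proof (intro set_eqI iffI)
    fix x :: real assume "x \<in> {path_cost (cc P Q R) p | p. is_path EE p \<and> hd p = 3 \<and> last p = 1}"
    then obtain p where "x = path_cost (cc P Q R) p" "is_path EE p" "hd p = 3" "last p = 1" by blast
    then show "x \<in> {Q}" using A by simp
  next
    fix x assume "x \<in> {Q}"
    then have "x = path_cost (cc P Q R) [3,1] \<and> is_path EE [3,1] \<and> hd [3,1] = (3::nat) \<and> last [3,1] = (1::nat)" using B by simp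
    then show "x \<in> {path_cost (cc P Q R) p | p. is_path EE p \<and> hd p = 3 \<and> last p = 1}" by blast
  qed
  thus ?thesis unfolding opt_cost_def by simp
qed

lemma opt_4: "opt_cost EE (cc P Q R) 1 4 = R"
proof -
  have A: "path_cost (cc P Q R) p = R" if "is_path EE p" "hd p = 4" "last p = 1" for p
  proof -
    note h = that
    obtain q where "p = 4#q" using hd_form[OF h(1) h(2)] by blast
    hence "p = [4,1]" using paths_4 h by simp
    thus ?thesis by (simp add: path_cost_Cons2 path_cost_single cc_def)
  qed
  have B: "path_cost (cc P Q R) [4,1] = R \<and> is_path EE [4,1] \<and> hd [4,1] = (4::nat) \<and> last [4,1] = (1::nat)"
    by (simp add: path_cost_Cons2 path_cost_single is_path_Cons2 is_path_single cc_def EE_def)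
  have "{path_cost (cc P Q R) p | p. is_path EE p \<and> hd p = 4 \<and> last p = 1} = {R}"
  proof (intro set_eqI iffI)
    fix x :: real assume "x \<in> {path_cost (cc P Q R) p | p. is_path EE p \<and> hd p = 4 \<and> last p = 1}"
    then obtain p where "x = path_cost (cc P Q R) p" "is_path EE p" "hd p = 4" "last p = 1" by blast
    then show "x \<in> {R}" using A by simp
  next
    fix x assume "x \<in> {R}"
    then have "x = path_cost (cc P Q R) [4,1] \<and> is_path EE [4,1] \<and> hd [4,1] = (4::nat) \<and> last [4,1] = (1::nat)" using B by simp
    then show "x \<in> {path_cost (cc P Q R) p | p. is_path EE p \<and> hd p = 4 \<and> last p = 1}" by blast
  qed
  thus ?thesis unfolding opt_cost_def by simp
qed

lemma opt_2: assumes "P \<le> Q" shows "opt_cost EE (cc P Q R) 1 2 = P"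
proof -
  have A: "path_cost (cc P Q R) p = P \<or> path_cost (cc P Q R) p = Q" if "is_path EE p" "hd p = 2" "last p = 1" for p
  proof -
    note h = that
    obtain q where "p = 2#q" using hd_form[OF h(1) h(2)] by blast
    hence "p = [2,1] \<or> p = [2,3,1]" using paths_2 h by simp
    thus ?thesis by (auto simp add: path_cost_Cons2 path_cost_single cc_def)
  qed
  have B: "path_cost (cc P Q R) [2,1] = P \<and> is_path EE [2,1] \<and> hd [2,1] = (2::nat) \<and> last [2,1] = (1::nat)"
    by (simp add: path_cost_Cons2 path_cost_single is_path_Cons2 is_path_single cc_def EE_def)
  have C: "path_cost (cc P Q R) [2,3,1] = Q \<and> is_path EE [2,3,1] \<and> hd [2,3,1] = (2::nat) \<and> last [2,3,1] = (1::nat)"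
    by (simp add: path_cost_Cons2 path_cost_single is_path_Cons2 is_path_single cc_def EE_def)
  have "{path_cost (cc P Q R) p | p. is_path EE p \<and> hd p = 2 \<and> last p = 1} = {P, Q}"
  proof (intro set_eqI iffI)
    fix x :: real assume "x \<in> {path_cost (cc P Q R) p | p. is_path EE p \<and> hd p = 2 \<and> last p = 1}"
    then obtain p where "x = path_cost (cc P Q R) p" "is_path EE p" "hd p = 2" "last p = 1" by blast
    then show "x \<in> {P, Q}" using A by auto
  next
    fix x assume "x \<in> {P, Q}"
    then have "(x = path_cost (cc P Q R) [2,1] \<and> is_path EE [2,1] \<and> hd [2,1] = (2::nat) \<and> last [2,1] = (1::nat))
       \<or> (x = path_cost (cc P Q R) [2,3,1] \<and> is_path EE [2,3,1] \<and> hd [2,3,1] = (2::nat) \<and> last [2,3,1] = (1::nat))" using B C by auto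
    then show "x \<in> {path_cost (cc P Q R) p | p. is_path EE p \<and> hd p = 2 \<and> last p = 1}" by blast
  qed
  thus ?thesis unfolding opt_cost_def using assms by simp
qed

definition rk :: "nat \<Rightarrow> nat" where
  "rk u = (if u = 0 then 3 else if u = 2 then 2 else if u = 1 then 0 else 1)"

lemma acyc: "acyclic EE"
proof -
  have "EE\<inverse> \<subseteq> measure rk" by (auto simp: EE_def rk_def)
  hence "acyclic (EE\<inverse>)" using acyclic_subset wf_acyclic wf_measure by blast
  thus ?thesis using acyclic_converse by blast
qed

lemma inst: assumes "0 \<le> P" "0 \<le> Q" "0 \<le> R"
  shows "is_instance {0,1,2,3,4} EE (cc P Q R) 0 1"
  unfolding is_instance_def using acyc assms
  by (auto simp: EE_def cc_def)

lemma gadget: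
  fixes b P Q R :: real
  assumes "b > 1" "0 < P" "P < Q" "Q < b*P" "b+P < R" "R < b+Q"
    and S: "soph_agent {0,1,2,3,4} EE (cc P Q R) 1 b Ss Cs"
    and N: "naive_agent {0,1,2,3,4} EE (cc P Q R) 1 b Sn Cn"
  shows "Cs 0 = R \<and> Cn 0 = 1 + Q"
proof -
  have E3: "\<And>v. (3,v)\<in>EE \<longleftrightarrow> v = 1" and E4: "\<And>v. (4,v)\<in>EE \<longleftrightarrow> v = 1"
   and E2: "\<And>v. (2,v)\<in>EE \<longleftrightarrow> v = 1 \<or> v = 3" and E0: "\<And>v. (0,v)\<in>EE \<longleftrightarrow> v = 2 \<or> v = 4"
    by (auto simp: EE_def)
  from S have s1: "Cs 1 = 0" and
    s: "\<And>u. u \<in> {0,2,3,4} \<Longrightarrow> (u, Ss u) \<in> EE \<and>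
        (\<forall>v. (u, v) \<in> EE \<longrightarrow> b * cc P Q R u (Ss u) + Cs (Ss u) \<le> b * cc P Q R u v + Cs v) \<and>
        Cs u = cc P Q R u (Ss u) + Cs (Ss u)"
    unfolding soph_agent_def by auto
  have "Ss 3 = 1" using s[of 3] E3 by auto
  hence cs3: "Cs 3 = Q" using s[of 3] s1 by (simp add: cc_def)
  have "Ss 4 = 1" using s[of 4] E4 by auto
  hence cs4: "Cs 4 = R" using s[of 4] s1 by (simp add: cc_def)
  have "Ss 2 = 3"
  proof (rule ccontr)
    assume "Ss 2 \<noteq> 3"
    hence "Ss 2 = 1" using s[of 2] E2 by auto
    hence "b*P \<le> Q" using s[of 2] s1 cs3 by (auto simp: cc_def E2)
    thus False using assms by simp
  qed
  hence cs2: "Cs 2 = Q" using s[of 2] cs3 by (simp add: cc_def)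
  have "Ss 0 = 4"
  proof (rule ccontr)
    assume "Ss 0 \<noteq> 4"
    hence "Ss 0 = 2" using s[of 0] E0 by auto
    hence "b*1 + Q \<le> R" using s[of 0] cs2 cs4 by (auto simp: cc_def E0)
    thus False using assms by simp
  qed
  hence cs0: "Cs 0 = R" using s[of 0] cs4 by (simp add: cc_def)
  from N have n1: "Cn 1 = 0" and
    n: "\<And>u. u \<in> {0,2,3,4} \<Longrightarrow> (u, Sn u) \<in> EE \<and>
        (\<forall>v. (u, v) \<in> EE \<longrightarrow> b * cc P Q R u (Sn u) + opt_cost EE (cc P Q R) 1 (Sn u)
            \<le> b * cc P Q R u v + opt_cost EE (cc P Q R) 1 v) \<and>
        Cn u = cc P Q R u (Sn u) + Cn (Sn u)"
    unfolding naive_agent_def by auto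
  have o1: "opt_cost EE (cc P Q R) 1 1 = 0" by (rule opt_1)
  have o2: "opt_cost EE (cc P Q R) 1 2 = P" using assms by (intro opt_2) simp
  note o3 = opt_3[of P Q R] and o4 = opt_4[of P Q R]
  have "Sn 3 = 1" using n[of 3] E3 by auto
  hence cn3: "Cn 3 = Q" using n[of 3] n1 by (simp add: cc_def)
  have "Sn 2 = 3"
  proof (rule ccontr)
    assume "Sn 2 \<noteq> 3"
    hence "Sn 2 = 1" using n[of 2] E2 by auto
    hence "b*P + 0 \<le> b*0 + Q" using n[of 2] o1 o3 unfolding E2 by (auto simp: cc_def)
    thus False using assms by simp
  qed
  hence cn2: "Cn 2 = Q" using n[of 2] cn3 by (simp add: cc_def)
  have "Sn 0 = 2"
  proof (rule ccontr)
    assume "Sn 0 \<noteq> 2"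
    hence "Sn 0 = 4" using n[of 0] E0 by auto
    hence "b*0 + R \<le> b*1 + P" using n[of 0] o2 o4 unfolding E0 by (auto simp: cc_def)
    thus False using assms by simp
  qed
  hence "Cn 0 = 1 + Q" using n[of 0] cn2 by (simp add: cc_def)
  with cs0 show ?thesis by simp
qed

theorem claim1:
  fixes b \<delta> :: real
  assumes "b > 1" and "\<delta> > 0"
  shows "\<exists>V E c s t. is_instance V E c s t \<and>
           (\<forall>Ss Cs Sn Cn. soph_agent V E c t b Ss Cs \<longrightarrow> naive_agent V E c t b Sn Cn \<longrightarrow>
              Cn s > 0 \<and> Cs s \<ge> (b - \<delta>) * Cn s)"
proof -
  define P where "P = \<delta> / (b*(1+b))"
  define Q where "Q = P*(1+b)/2"
  define R where "R = b + P*(3+b)/4"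
  have P0: "P > 0" using assms by (simp add: P_def)
  have PQ: "P < Q" using P0 assms by (simp add: Q_def field_simps)
  have Qb: "Q < b*P" using P0 assms by (simp add: Q_def field_simps)
  have R1: "b+P < R" using P0 assms by (simp add: R_def field_simps)
  have R2: "R < b+Q" using P0 assms by (simp add: R_def Q_def field_simps)
  have bpos: "b*(1+b) > 0" using assms by simp
  have Pd: "b*P*(1+b) = \<delta>" using bpos unfolding P_def by (metis mult.assoc mult.commute nonzero_eq_divide_eq order_less_irrefl)
  have key: "R \<ge> (b - \<delta>) * (1 + Q)"
  proof -
    have "(b - \<delta>) * (1 + Q) = b - \<delta> + b*Q - \<delta>*Q" by (simp add: algebra_simps)
    also have "b*Q = \<delta>/2" using Pd by (simp add: Q_def field_simps)
    finally have e: "(b - \<delta>) * (1 + Q) = b - \<delta>/2 - \<delta>*Q" by simp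
    have "\<delta>*Q \<ge> 0" using assms PQ P0 by simp
    with e have "(b - \<delta>) * (1 + Q) \<le> b - \<delta>/2" by linarith
    also have "\<dots> \<le> R" using R1 assms P0 by simp
    finally show ?thesis .
  qed
  have I: "is_instance {0,1,2,3,4} EE (cc P Q R) 0 1" using inst[of P Q R] P0 PQ R1 assms by simp
  have G: "\<forall>Ss Cs Sn Cn. soph_agent {0,1,2,3,4} EE (cc P Q R) 1 b Ss Cs \<longrightarrow> naive_agent {0,1,2,3,4} EE (cc P Q R) 1 b Sn Cn \<longrightarrow>
              Cn 0 > 0 \<and> Cs 0 \<ge> (b - \<delta>) * Cn 0"
  proof (intro allI impI)
    fix Ss Cs Sn Cn
    assume "soph_agent {0,1,2,3,4} EE (cc P Q R) 1 b Ss Cs" "naive_agent {0,1,2,3,4} EE (cc P Q R) 1 b Sn Cn"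
    from gadget[OF assms(1) P0 PQ Qb R1 R2 this] have "Cs 0 = R" "Cn 0 = 1 + Q" by auto
    thus "Cn 0 > 0 \<and> Cs 0 \<ge> (b - \<delta>) * Cn 0" using key P0 PQ by simp
  qed
  show ?thesis using I G by blast
qed

end
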